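(* Let $n \equiv 1 \pmod 6$ be a positive integer and let $\alpha$ be a primitive element of $\mathbb{F}_{2^n}$ (identified with $\mathbb{F}_2^n$). If there exist $\frac{2^n-2}{42}$ pairwise disjoint complete $3$-dimensional subspaces of $\mathbb{F}_2^n$, then there exists a Steiner structure $\mathbb{S}_2[2,3,n]$.
   Context: For a $3$-dimensional $\mathbb{F}_2$-subspace $X = \{0,\alpha^{i_1},\ldots,\alpha^{i_7}\}$ of $\mathbb{F}_{2^n}$ with $i_1,\ldots,i_7\in\{0,\ldots,2^n-2\}$ distinct, its difference set is $\Delta(X) = \{ i_r - i_s \bmod (2^n-1) : 1 \le r,s\le 7,\ r\ne s\}$. $X$ is complete if $|\Delta(X)| = 42$; two complete subspaces $X,Y$ are disjoint complete (pairwise disjoint complete) if $\Delta(X)\cap\Delta(Y) = \varnothing$. A Steiner structure $\mathbb{S}_q[t,k,n]$ is a set $\mathbb{S}$ of $k$-dimensional subspaces of $\mathbb{F}_q^n$ such that every $t$-dimensional subspace of $\mathbb{F}_q^n$ is contained in exactly one element of $\mathbb{S}$. *)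

theory Defs
  imports Main
begin

text \<open>The ambient space F_2^n is identified with the additive group of a finite field
  of order 2^n.  An F_2-subspace is a subset containing 0 and closed under addition
  (the only scalars are 0 and 1).  A k-dimensional F_2-subspace has exactly 2^k elements.\<close>

definition f2_subspace :: "'a::field set \<Rightarrow> bool" where
  "f2_subspace X \<longleftrightarrow> 0 \<in> X \<and> (\<forall>x\<in>X. \<forall>y\<in>X. x + y \<in> X)"

definition f2_subspace_dim :: "nat \<Rightarrow> 'a::field set \<Rightarrow> bool" where
  "f2_subspace_dim k X \<longleftrightarrow> f2_subspace X \<and> finite X \<and> card X = 2 ^ k"

definition primitive_elem :: "nat \<Rightarrow> 'a::field \<Rightarrow> bool" where
  "primitive_elem n \<alpha> \<longleftrightarrow> \<alpha> \<noteq> 0 \<and> (\<forall>x. x \<noteq> 0 \<longrightarrow> (\<exists>i. x = \<alpha> ^ i))"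

definition dlog :: "nat \<Rightarrow> 'a::field \<Rightarrow> 'a \<Rightarrow> nat" where
  "dlog n \<alpha> x = (THE i. i < 2 ^ n - 1 \<and> \<alpha> ^ i = x)"

definition diff_set :: "nat \<Rightarrow> 'a::field \<Rightarrow> 'a set \<Rightarrow> int set" where
  "diff_set n \<alpha> X = {(int (dlog n \<alpha> a) - int (dlog n \<alpha> b)) mod (2 ^ n - 1) | a b.
       a \<in> X - {0} \<and> b \<in> X - {0} \<and> a \<noteq> b}"

definition complete_subspace :: "nat \<Rightarrow> 'a::field \<Rightarrow> 'a set \<Rightarrow> bool" where
  "complete_subspace n \<alpha> X \<longleftrightarrow> f2_subspace_dim 3 X \<and> card (diff_set n \<alpha> X) = 42"

definition disjoint_complete :: "nat \<Rightarrow> 'a::field \<Rightarrow> 'a set \<Rightarrow> 'a set \<Rightarrow> bool" where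
  "disjoint_complete n \<alpha> X Y \<longleftrightarrow> complete_subspace n \<alpha> X \<and> complete_subspace n \<alpha> Y
      \<and> diff_set n \<alpha> X \<inter> diff_set n \<alpha> Y = {}"

definition steiner_structure_2 :: "nat \<Rightarrow> nat \<Rightarrow> 'a::field set set \<Rightarrow> bool" where
  "steiner_structure_2 t k S \<longleftrightarrow> (\<forall>X\<in>S. f2_subspace_dim k X) \<and>
     (\<forall>T. f2_subspace_dim t T \<longrightarrow> (\<exists>!X. X \<in> S \<and> T \<subseteq> X))"

end

theory Submission imports Defs "HOL-Number_Theory.Number_Theory" begin

lemma char2:
  assumes "card (UNIV :: 'a::{field,finite} set) = 2 ^ n" "n > 0"
  shows "(1::'a) + 1 = 0"
proof -
  have p: "prime CHAR('a)" by (rule prime_CHAR_semidom) (simp add: finite_imp_CHAR_pos)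
  have "CHAR('a) dvd 2 ^ n" using CHAR_dvd_CARD[where 'a='a] assms by simp
  hence "CHAR('a) dvd 2" using p prime_dvd_power by blast
  hence "CHAR('a) = 2" using p by (simp add: primes_dvd_imp_eq)
  hence "of_nat 2 = (0::'a)" by (metis of_nat_CHAR)
  thus ?thesis by simp
qed
lemma pow_card_minus1:
  fixes \<alpha> :: "'a::{field,finite}"
  assumes "\<alpha> \<noteq> 0"
  shows "\<alpha> ^ (card (UNIV::'a set) - 1) = 1"
proof -
  let ?U = "UNIV - {0::'a}"
  have fin: "finite ?U" by simp
  have im: "(\<lambda>x. \<alpha> * x) ` ?U = ?U"
  proof
    show "(\<lambda>x. \<alpha> * x) ` ?U \<subseteq> ?U" using assms by auto
    show "?U \<subseteq> (\<lambda>x. \<alpha> * x) ` ?U"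
    proof
      fix y assume "y \<in> ?U"
      hence "y = \<alpha> * (y / \<alpha>)" "y / \<alpha> \<in> ?U" using assms by auto
      thus "y \<in> (\<lambda>x. \<alpha> * x) ` ?U" by blast
    qed
  qed
  have inj: "inj_on (\<lambda>x. \<alpha> * x) ?U" using assms by (auto simp: inj_on_def)
  have "prod id ?U = prod id ((\<lambda>x. \<alpha> * x) ` ?U)" using im by simp
  also have "\<dots> = prod (\<lambda>x. \<alpha> * x) ?U" using prod.reindex[OF inj, of id] by simp
  also have "\<dots> = \<alpha> ^ card ?U * prod id ?U" by (simp add: prod.distrib)
  finally have "prod id ?U = \<alpha> ^ card ?U * prod id ?U" .
  moreover have "prod id ?U \<noteq> 0" using fin by (simp add: prod_zero_iff)
  ultimately have "\<alpha> ^ card ?U = 1" by simp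
  moreover have "card ?U = card (UNIV::'a set) - 1" by (simp add: card_Diff_singleton)
  ultimately show ?thesis by simp
qed

lemma pow_mod_N:
  fixes \<alpha> :: "'a::{field,finite}"
  assumes "\<alpha> \<noteq> 0"
  shows "\<alpha> ^ m = \<alpha> ^ (m mod (card (UNIV::'a set) - 1))"
proof -
  let ?N = "card (UNIV::'a set) - 1"
  have "\<alpha> ^ m = \<alpha> ^ (?N * (m div ?N) + m mod ?N)" by simp
  also have "\<dots> = (\<alpha> ^ ?N) ^ (m div ?N) * \<alpha> ^ (m mod ?N)" by (simp only: power_add power_mult)
  also have "\<dots> = 1 ^ (m div ?N) * \<alpha> ^ (m mod ?N)" by (simp only: pow_card_minus1[OF assms])
  finally show ?thesis by simp
qed

lemma prim_inj:
  fixes \<alpha> :: "'a::{field,finite}"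
  assumes "primitive_elem n \<alpha>"
  shows "inj_on (\<lambda>i. \<alpha> ^ i) {..<card (UNIV::'a set) - 1}"
proof -
  let ?N = "card (UNIV::'a set) - 1"
  have a0: "\<alpha> \<noteq> 0" using assms by (simp add: primitive_elem_def)
  have im: "(\<lambda>i. \<alpha> ^ i) ` {..<?N} = UNIV - {0}"
  proof
    show "(\<lambda>i. \<alpha> ^ i) ` {..<?N} \<subseteq> UNIV - {0}" using a0 by auto
    show "UNIV - {0} \<subseteq> (\<lambda>i. \<alpha> ^ i) ` {..<?N}"
    proof
      fix x assume "x \<in> (UNIV::'a set) - {0}"
      then obtain i where i: "x = \<alpha> ^ i" using assms by (auto simp: primitive_elem_def)
      have "card (UNIV::'a set) \<ge> 2"
      proof -
        have "{0::'a, 1} \<subseteq> UNIV" by simp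
        hence "card {0::'a,1} \<le> card (UNIV::'a set)" by (rule card_mono[rotated]) simp
        thus ?thesis by simp
      qed
      hence "?N > 0" by simp
      hence "i mod ?N < ?N" by simp
      moreover have "x = \<alpha> ^ (i mod ?N)" using i pow_mod_N[OF a0] by metis
      ultimately show "x \<in> (\<lambda>i. \<alpha> ^ i) ` {..<?N}" by blast
    qed
  qed
  have "card ((\<lambda>i. \<alpha> ^ i) ` {..<?N}) = card {..<?N}"
    using im by (simp add: card_Diff_singleton)
  thus ?thesis by (simp add: inj_on_iff_eq_card)
qed

lemma dlog_props:
  fixes \<alpha> :: "'a::{field,finite}"
  assumes "primitive_elem n \<alpha>" "card (UNIV::'a set) = 2 ^ n" "x \<noteq> 0"
  shows "dlog n \<alpha> x < 2 ^ n - 1 \<and> \<alpha> ^ dlog n \<alpha> x = x"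
proof -
  let ?N = "card (UNIV::'a set) - 1"
  have a0: "\<alpha> \<noteq> 0" using assms by (simp add: primitive_elem_def)
  obtain i where i: "x = \<alpha> ^ i" using assms by (auto simp: primitive_elem_def)
  have "card (UNIV::'a set) \<ge> 2"
  proof -
    have "{0::'a, 1} \<subseteq> UNIV" by simp
    hence "card {0::'a,1} \<le> card (UNIV::'a set)" by (rule card_mono[rotated]) simp
    thus ?thesis by simp
  qed
  hence "?N > 0" by simp
  moreover have "\<alpha> ^ (i mod ?N) = x" using i pow_mod_N[OF a0, of i] by simp
  ultimately have ex: "i mod ?N < ?N \<and> \<alpha> ^ (i mod ?N) = x" by simp
  have "\<exists>!j. j < 2 ^ n - 1 \<and> \<alpha> ^ j = x"
  proof (rule ex1I[of _ "i mod ?N"])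
    show "i mod ?N < 2 ^ n - 1 \<and> \<alpha> ^ (i mod ?N) = x" using ex assms(2) by simp
    fix j assume "j < 2 ^ n - 1 \<and> \<alpha> ^ j = x"
    thus "j = i mod ?N" using ex assms(2) prim_inj[OF assms(1)] unfolding inj_on_def by auto
  qed
  from theI'[OF this] show ?thesis unfolding dlog_def by blast
qed

lemma ratio_iff:
  fixes \<alpha> :: "'a::{field,finite}"
  assumes "primitive_elem n \<alpha>" "card (UNIV::'a set) = 2 ^ n"
    and "p \<noteq> 0" "q \<noteq> 0" "r \<noteq> 0" "s \<noteq> 0"
  shows "p * s = q * r \<longleftrightarrow>
    (int (dlog n \<alpha> p) - int (dlog n \<alpha> q)) mod (2 ^ n - 1) =
    (int (dlog n \<alpha> r) - int (dlog n \<alpha> s)) mod (2 ^ n - 1)"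
proof -
  let ?N = "2 ^ n - 1 :: nat"
  let ?d = "dlog n \<alpha>"
  have a0: "\<alpha> \<noteq> 0" using assms by (simp add: primitive_elem_def)
  note dp = dlog_props[OF assms(1,2)]
  have ps: "p * s = \<alpha> ^ ((?d p + ?d s) mod ?N)"
    using dp[OF assms(3)] dp[OF assms(6)] pow_mod_N[OF a0, of "?d p + ?d s"] assms(2)
    by (simp add: power_add)
  have qr: "q * r = \<alpha> ^ ((?d q + ?d r) mod ?N)"
    using dp[OF assms(4)] dp[OF assms(5)] pow_mod_N[OF a0, of "?d q + ?d r"] assms(2)
    by (simp add: power_add)
  have Npos: "?N > 0" using dp[OF assms(3)] by linarith
  have "p * s = q * r \<longleftrightarrow> (?d p + ?d s) mod ?N = (?d q + ?d r) mod ?N"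
  proof
    assume "p * s = q * r"
    thus "(?d p + ?d s) mod ?N = (?d q + ?d r) mod ?N"
      using ps qr prim_inj[OF assms(1)] assms(2) Npos unfolding inj_on_def by simp
  qed (use ps qr in simp)
  also have "\<dots> \<longleftrightarrow> int ((?d p + ?d s) mod ?N) = int ((?d q + ?d r) mod ?N)" by linarith
  also have "\<dots> \<longleftrightarrow> (int (?d p) + int (?d s)) mod int ?N = (int (?d q) + int (?d r)) mod int ?N"
    by (simp add: zmod_int)
  also have "\<dots> \<longleftrightarrow> int ?N dvd (int (?d p) + int (?d s)) - (int (?d q) + int (?d r))"
    by (rule mod_eq_dvd_iff)
  also have "\<dots> \<longleftrightarrow> int ?N dvd (int (?d p) - int (?d q)) - (int (?d r) - int (?d s))"
    by (simp add: algebra_simps)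
  also have "\<dots> \<longleftrightarrow> (int (?d p) - int (?d q)) mod int ?N = (int (?d r) - int (?d s)) mod int ?N"
    by (rule mod_eq_dvd_iff[symmetric])
  also have "int ?N = 2 ^ n - 1" by (simp add: of_nat_diff)
  finally show ?thesis .
qed


lemma two_dim:
  fixes T :: "'a::field set"
  assumes c2: "(1::'a) + 1 = 0" and T: "f2_subspace_dim 2 T"
  obtains a b where "a \<in> T" "b \<in> T" "a \<noteq> 0" "b \<noteq> 0" "a \<noteq> b" "T \<subseteq> {0, a, b, a + b}"
proof -
  have fin: "finite T" and c: "card T = 4" and z: "0 \<in> T" and cl: "\<forall>x\<in>T. \<forall>y\<in>T. x + y \<in> T"
    using T by (auto simp: f2_subspace_dim_def f2_subspace_def)
  have "card (T - {0}) = 3" using c z fin by (simp add: card_Diff_singleton)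
  then obtain a b e where abe: "T - {0} = {a, b, e}" "a \<noteq> b" "b \<noteq> e" "a \<noteq> e"
    by (auto simp: card_3_iff)
  have aT: "a \<in> T" "b \<in> T" "a \<noteq> 0" "b \<noteq> 0" "e \<noteq> 0" using abe(1) by blast+
  have "a + b \<in> T" using cl aT by blast
  moreover have "a + b \<noteq> 0"
  proof
    assume "a + b = 0"
    hence "a = - b" by (simp add: eq_neg_iff_add_eq_0)
    moreover have "b + b = 0" using c2 by (metis distrib_left mult_1_right mult_zero_right mult.commute)
    hence "- b = b" by (simp add: eq_neg_iff_add_eq_0 minus_equation_iff)
    ultimately show False using abe(2) by simp
  qed
  moreover have "a + b \<noteq> a" "a + b \<noteq> b" using aT by auto
  ultimately have "a + b = e" using abe(1) by blast
  hence "T \<subseteq> {0, a, b, a + b}" using abe(1) by blast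
  thus ?thesis using that aT abe by blast
qed

lemma scale_dim:
  fixes X :: "'a::field set"
  assumes "c \<noteq> 0" "f2_subspace_dim k X"
  shows "f2_subspace_dim k ((\<lambda>x. c * x) ` X)"
proof -
  have inj: "inj_on (\<lambda>x. c * x) X" using assms(1) by (auto simp: inj_on_def)
  have "\<forall>x\<in>(\<lambda>x. c * x) ` X. \<forall>y\<in>(\<lambda>x. c * x) ` X. x + y \<in> (\<lambda>x. c * x) ` X"
  proof (intro ballI)
    fix x y assume "x \<in> (\<lambda>x. c * x) ` X" "y \<in> (\<lambda>x. c * x) ` X"
    then obtain u v where "u \<in> X" "v \<in> X" "x = c * u" "y = c * v" by blast
    moreover have "u + v \<in> X" using assms(2) \<open>u \<in> X\<close> \<open>v \<in> X\<close>
      by (auto simp: f2_subspace_dim_def f2_subspace_def)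
    ultimately show "x + y \<in> (\<lambda>x. c * x) ` X" by (metis distrib_left image_eqI)
  qed
  moreover have "0 \<in> (\<lambda>x. c * x) ` X" using assms(2)
    by (auto simp: f2_subspace_dim_def f2_subspace_def intro: image_eqI[of 0 _ 0])
  ultimately show ?thesis using assms(2) card_image[OF inj]
    by (simp add: f2_subspace_dim_def f2_subspace_def)
qed

definition dpair :: "nat \<Rightarrow> 'a::field \<Rightarrow> 'a \<times> 'a \<Rightarrow> int" where
  "dpair n \<alpha> = (\<lambda>(a, b). (int (dlog n \<alpha> a) - int (dlog n \<alpha> b)) mod (2 ^ n - 1))"

definition pairs :: "'a::zero set \<Rightarrow> ('a \<times> 'a) set" where
  "pairs X = {(a, b). a \<in> X - {0} \<and> b \<in> X - {0} \<and> a \<noteq> b}"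

lemma diff_set_image: "diff_set n \<alpha> X = dpair n \<alpha> ` pairs X"
  unfolding diff_set_def dpair_def pairs_def by auto

lemma pairs_card:
  fixes X :: "'a::field set"
  assumes "f2_subspace_dim 3 X"
  shows "card (pairs X) = 42"
proof -
  let ?X0 = "X - {0}"
  have fin: "finite X" "card X = 8" "0 \<in> X" using assms by (auto simp: f2_subspace_dim_def f2_subspace_def)
  hence c7: "card ?X0 = 7" by (simp add: card_Diff_singleton)
  have eq: "pairs X = ?X0 \<times> ?X0 - (\<lambda>x. (x, x)) ` ?X0" unfolding pairs_def by auto
  have "card ((\<lambda>x. (x, x)) ` ?X0) = 7" using c7 by (simp add: card_image inj_on_def)
  moreover have "card (?X0 \<times> ?X0) = 49" using c7 by (simp add: card_cartesian_product)
  moreover have "(\<lambda>x. (x, x)) ` ?X0 \<subseteq> ?X0 \<times> ?X0" by auto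
  ultimately show ?thesis unfolding eq using fin by (simp add: card_Diff_subset)
qed

lemma complete_inj:
  fixes X :: "'a::field set"
  assumes "complete_subspace n \<alpha> X"
  shows "inj_on (dpair n \<alpha>) (pairs X)"
proof -
  have d: "f2_subspace_dim 3 X" and c: "card (diff_set n \<alpha> X) = 42"
    using assms by (auto simp: complete_subspace_def)
  have "finite (pairs X)" using d unfolding pairs_def f2_subspace_dim_def
    by (rule_tac finite_subset[of _ "X \<times> X"]) auto
  thus ?thesis using c pairs_card[OF d] by (simp add: inj_on_iff_eq_card diff_set_image)
qed

lemma dpair_range:
  fixes \<alpha> :: "'a::{field,finite}"
  assumes "primitive_elem n \<alpha>" "card (UNIV::'a set) = 2 ^ n"
    and "a \<noteq> 0" "b \<noteq> 0" "a \<noteq> b" and npos: "n > 0"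
  shows "dpair n \<alpha> (a, b) \<in> {1..<2 ^ n - 1}"
proof -
  have one: "(1::'a) \<noteq> 0" by simp
  have r: "a * 1 = b * 1 \<longleftrightarrow> dpair n \<alpha> (a, b) = (int (dlog n \<alpha> 1) - int (dlog n \<alpha> 1)) mod (2 ^ n - 1)"
    using ratio_iff[OF assms(1,2,3,4) one one] unfolding dpair_def by simp
  hence ne: "dpair n \<alpha> (a, b) \<noteq> 0" using assms(5) by simp
  have "(2::int) ^ 1 \<le> 2 ^ n" by (rule power_increasing) (use npos in simp_all)
  hence "(2::int) ^ n - 1 > 0" by simp
  hence "0 \<le> dpair n \<alpha> (a, b)" "dpair n \<alpha> (a, b) < 2 ^ n - 1" unfolding dpair_def by auto
  thus ?thesis using ne by auto
qed

lemma div42: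
  assumes "n mod 6 = (1::nat)"
  shows "42 dvd (2::nat) ^ n - 2"
proof -
  obtain k where k: "n = 6 * k + 1" using assms by (metis div_mult_mod_eq add.commute mult.commute)
  have "(64::nat) ^ k mod 63 = (64 mod 63) ^ k mod 63" by (rule power_mod[symmetric])
  hence "(64::nat) ^ k mod 63 = 1" by simp
  hence d63: "63 dvd (64::nat) ^ k - 1" using dvd_minus_mod[of 63 "(64::nat)^k"] by simp
  have "(2::nat) ^ n = 2 * 64 ^ k" unfolding k by (simp add: power_add power_mult)
  hence "(2::nat) ^ n - 2 = 2 * (64 ^ k - 1)" by (simp add: diff_mult_distrib2)
  moreover have "126 dvd 2 * ((64::nat) ^ k - 1)" using d63 by (metis mult_dvd_mono dvd_refl num_double numeral_times_numeral mult_2)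
  ultimately have "126 dvd (2::nat) ^ n - 2" by simp
  thus ?thesis by (rule dvd_trans[rotated]) simp
qed

theorem theorem1:
  fixes n :: nat and \<alpha> :: "'a::{field,finite}"
  assumes "n > 0" and "n mod 6 = 1"
    and "card (UNIV :: 'a set) = 2 ^ n"
    and "primitive_elem n \<alpha>"
    and "\<exists>F. card F = (2 ^ n - 2) div 42 \<and> (\<forall>X\<in>F. complete_subspace n \<alpha> X)
            \<and> (\<forall>X\<in>F. \<forall>Y\<in>F. X \<noteq> Y \<longrightarrow> disjoint_complete n \<alpha> X Y)"
  shows "\<exists>S::'a set set. steiner_structure_2 2 3 S"
proof -
  have c2: "(1::'a) + 1 = 0" using char2[OF assms(3,1)] .
  obtain F where Fc: "card F = (2 ^ n - 2) div 42" and Fco: "\<forall>X\<in>F. complete_subspace n \<alpha> X"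
    and Fd: "\<forall>X\<in>F. \<forall>Y\<in>F. X \<noteq> Y \<longrightarrow> disjoint_complete n \<alpha> X Y" using assms(5) by blast
  have Fdim: "\<And>X. X \<in> F \<Longrightarrow> f2_subspace_dim 3 X" using Fco by (simp add: complete_subspace_def)
  have finF: "finite F" by simp
  have finP: "\<And>X. finite (pairs (X::'a set))" by simp
  define U where "U = \<Union> (diff_set n \<alpha> ` F)"
  have "card U = (\<Sum>X\<in>F. card (diff_set n \<alpha> X))" unfolding U_def
  proof (rule card_UN_disjoint[OF finF])
    show "\<forall>X\<in>F. finite (diff_set n \<alpha> X)" by (simp add: diff_set_image)
    show "\<forall>X\<in>F. \<forall>Y\<in>F. X \<noteq> Y \<longrightarrow> diff_set n \<alpha> X \<inter> diff_set n \<alpha> Y = {}"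
      using Fd by (simp add: disjoint_complete_def)
  qed
  also have "\<dots> = (\<Sum>X\<in>F. 42)" using Fco by (simp add: complete_subspace_def)
  also have "\<dots> = 2 ^ n - 2" using Fc div42[OF assms(2)] by simp
  finally have cU: "card U = 2 ^ n - 2" .
  have Usub: "U \<subseteq> {1..<2 ^ n - 1}"
  proof
    fix d assume "d \<in> U"
    then obtain X p where "X \<in> F" "p \<in> pairs X" "d = dpair n \<alpha> p"
      unfolding U_def diff_set_image by blast
    thus "d \<in> {1..<2 ^ n - 1}" using dpair_range[OF assms(4,3) _ _ _ assms(1)]
      unfolding pairs_def by auto
  qed
  have "card {1..<(2::int) ^ n - 1} = 2 ^ n - 2"
  proof -
    have "card {1..<(2::int) ^ n - 1} = nat (2 ^ n - 2)" by simp
    also have "(2::int) ^ n - 2 = int (2 ^ n - 2)"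
    proof -
      have "(2::nat) ^ 1 \<le> 2 ^ n" by (rule power_increasing) (use assms(1) in simp_all)
      thus ?thesis by (simp add: of_nat_diff)
    qed
    finally show ?thesis by simp
  qed
  hence Ueq: "U = {1..<2 ^ n - 1}" using Usub cU by (intro card_subset_eq) auto
  define S where "S = {(\<lambda>x. c * x) ` X | c X. c \<noteq> 0 \<and> X \<in> F}"
  have Sdim: "\<forall>Y\<in>S. f2_subspace_dim 3 Y" unfolding S_def using Fdim scale_dim by blast
  have "\<forall>T. f2_subspace_dim 2 T \<longrightarrow> (\<exists>!Y. Y \<in> S \<and> T \<subseteq> Y)"
  proof (intro allI impI)
    fix T :: "'a set" assume T: "f2_subspace_dim 2 T"
    obtain a b where ab: "a \<in> T" "b \<in> T" "a \<noteq> 0" "b \<noteq> 0" "a \<noteq> b" "T \<subseteq> {0, a, b, a + b}"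
      using two_dim[OF c2 T] by blast
    have sub: "T \<subseteq> Y \<longleftrightarrow> a \<in> Y \<and> b \<in> Y" if "f2_subspace_dim 3 Y" for Y
      using that ab by (auto simp: f2_subspace_dim_def f2_subspace_def)
    show "\<exists>!Y. Y \<in> S \<and> T \<subseteq> Y"
    proof (rule ex_ex1I)
      have "dpair n \<alpha> (a, b) \<in> U" using Ueq dpair_range[OF assms(4,3) ab(3,4,5) assms(1)] by simp
      then obtain X x1 x2 where X: "X \<in> F" "(x1, x2) \<in> pairs X" "dpair n \<alpha> (a, b) = dpair n \<alpha> (x1, x2)"
        unfolding U_def diff_set_image by fastforce
      have x: "x1 \<in> X" "x2 \<in> X" "x1 \<noteq> 0" "x2 \<noteq> 0" using X(2) unfolding pairs_def by auto
      have "a * x2 = b * x1" using ratio_iff[OF assms(4,3) ab(3,4) x(3,4)] X(3)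
        unfolding dpair_def by simp
      define c where "c = a / x1"
      have c0: "c \<noteq> 0" using ab x unfolding c_def by simp
      have "c * x1 = a" using x unfolding c_def by simp
      moreover have "c * x2 = b" using x \<open>a * x2 = b * x1\<close> unfolding c_def
        by (metis divide_eq_eq mult.commute times_divide_eq_left)
      ultimately have "a \<in> (\<lambda>x. c * x) ` X" "b \<in> (\<lambda>x. c * x) ` X" using x by (metis image_eqI)+
      moreover have "(\<lambda>x. c * x) ` X \<in> S" using c0 X(1) unfolding S_def by blast
      ultimately show "\<exists>Y. Y \<in> S \<and> T \<subseteq> Y" using sub Sdim by blast
    next
      fix Y1 Y2 assume Y1: "Y1 \<in> S \<and> T \<subseteq> Y1" and Y2: "Y2 \<in> S \<and> T \<subseteq> Y2"
      obtain c X where cX: "c \<noteq> 0" "X \<in> F" "Y1 = (\<lambda>x. c * x) ` X" using Y1 unfolding S_def by blast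
      obtain c' X' where cX': "c' \<noteq> 0" "X' \<in> F" "Y2 = (\<lambda>x. c' * x) ` X'" using Y2 unfolding S_def by blast
      obtain x1 x2 where x: "x1 \<in> X" "x2 \<in> X" "a = c * x1" "b = c * x2"
        using Y1 ab cX(3) by blast
      obtain y1 y2 where y: "y1 \<in> X'" "y2 \<in> X'" "a = c' * y1" "b = c' * y2"
        using Y2 ab cX'(3) by blast
      have nz: "x1 \<noteq> 0" "x2 \<noteq> 0" "y1 \<noteq> 0" "y2 \<noteq> 0" "x1 \<noteq> x2" "y1 \<noteq> y2"
        using x y ab by auto
      have "x1 * y2 * (c * c') = (c * x1) * (c' * y2)" by (simp add: algebra_simps)
      also have "\<dots> = a * b" using x(3) y(4) by simp
      also have "\<dots> = (c * x2) * (c' * y1)" using x(4) y(3) by (simp add: algebra_simps)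
      also have "\<dots> = x2 * y1 * (c * c')" by (simp add: algebra_simps)
      finally have "x1 * y2 * (c * c') = x2 * y1 * (c * c')" .
      hence "x1 * y2 = x2 * y1" using cX(1) cX'(1) by simp
      hence eqd: "dpair n \<alpha> (x1, x2) = dpair n \<alpha> (y1, y2)"
        using ratio_iff[OF assms(4,3) nz(1,2,3,4)] unfolding dpair_def by simp
      have px: "(x1, x2) \<in> pairs X" and py: "(y1, y2) \<in> pairs X'"
        using x y nz unfolding pairs_def by auto
      have "X = X'"
      proof (rule ccontr)
        assume "X \<noteq> X'"
        hence "diff_set n \<alpha> X \<inter> diff_set n \<alpha> X' = {}" using Fd cX(2) cX'(2)
          by (simp add: disjoint_complete_def)
        moreover have "dpair n \<alpha> (x1, x2) \<in> diff_set n \<alpha> X \<inter> diff_set n \<alpha> X'"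
          using px py eqd by (simp add: diff_set_image) (metis image_eqI)
        ultimately show False by blast
      qed
      hence "(x1, x2) = (y1, y2)" using complete_inj[OF Fco[rule_format, OF cX(2)]] px py eqd
        unfolding inj_on_def by blast
      hence "c = c'" using x(3) y(3) nz(1) by simp
      thus "Y1 = Y2" using cX(3) cX'(3) \<open>X = X'\<close> by simp
    qed
  qed
  thus ?thesis using Sdim unfolding steiner_structure_2_def by blast
qed

end
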